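(* Let $\hat A=\sum_{i=1}^p b_i\prod_{j=1}^{l_i}(\hat a^\dagger)^{n_{i,j}}(\hat a)^{m_{i,j}}$ be a single-mode operator, with $b_i\in\mathbb C$ and nonnegative integers $n_{i,j},m_{i,j}$, such that every term contains at most $n$ creation operators in total, i.e. $\sum_{j=1}^{l_i}n_{i,j}\le n$ for all $i$. Then $\hat A$ has approximate operator coherent rank at most $n+1$.
   Context: Single mode with Fock basis $\{|n\rangle\}$, annihilation operator $\hat a=\sum_{n\ge1}\sqrt n|n-1\rangle\langle n|$, creation operator $\hat a^\dagger$. Coherent state $|\alpha\rangle=e^{-|\alpha|^2/2}\sum_n\frac{\alpha^n}{\sqrt{n!}}|n\rangle$. A (possibly unnormalized) state has coherent rank $k$ if it is a superposition of $k$ coherent states; its approximate coherent rank is the smallest $k$ such that for every $\delta>0$ there is a coherent rank $k$ state with fidelity (after normalization) greater than $1-\delta$ to it. An operator $\hat A$ has approximate operator coherent rank $\ell$ iff $\hat A|\alpha\rangle$ has approximate coherent rank at most $\ell$ for every coherent state $|\alpha\rangle$. *)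

theory Defs
  imports "HOL-Analysis.Analysis"
begin

text \<open>Single-mode states are represented by their Fock-basis coefficient
  sequences (coefficient of the number state n).\<close>

type_synonym state = "nat \<Rightarrow> complex"

definition ann :: "state \<Rightarrow> state" where
  "ann \<psi> = (\<lambda>k. complex_of_real (sqrt (real (Suc k))) * \<psi> (Suc k))"

definition adag :: "state \<Rightarrow> state" where
  "adag \<psi> = (\<lambda>k. if k = 0 then 0 else complex_of_real (sqrt (real k)) * \<psi> (k - 1))"

definition coh :: "complex \<Rightarrow> state" where
  "coh \<alpha> = (\<lambda>k. complex_of_real (exp (- ((cmod \<alpha>) ^ 2) / 2)) * \<alpha> ^ k
                   / complex_of_real (sqrt (fact k)))"

text \<open>Normally-ordered monomial product: the list [(n1,m1),...,(nl,ml)] denotes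
  (a^dag)^n1 a^m1 (a^dag)^n2 a^m2 ... (a^dag)^nl a^ml.\<close>
definition word_op :: "(nat \<times> nat) list \<Rightarrow> state \<Rightarrow> state" where
  "word_op ws = foldr (\<lambda>(n, m) F. (adag ^^ n) \<circ> (ann ^^ m) \<circ> F) ws id"

definition inner_st :: "state \<Rightarrow> state \<Rightarrow> complex" where
  "inner_st \<phi> \<psi> = infsum (\<lambda>k. cnj (\<phi> k) * \<psi> k) UNIV"

definition fidelity :: "state \<Rightarrow> state \<Rightarrow> real" where
  "fidelity \<phi> \<psi> = (cmod (inner_st \<phi> \<psi>))^2 / (Re (inner_st \<phi> \<phi>) * Re (inner_st \<psi> \<psi>))"

text \<open>Coherent rank at most k: a superposition of k coherent states
  (coefficients may vanish / points may repeat, so this means rank \<le> k).\<close>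
definition coherent_rank_le :: "state \<Rightarrow> nat \<Rightarrow> bool" where
  "coherent_rank_le \<phi> k \<longleftrightarrow>
     (\<exists>c \<alpha> :: nat \<Rightarrow> complex. \<phi> = (\<lambda>j. \<Sum>i<k. c i * coh (\<alpha> i) j))"

text \<open>Approximate coherent rank at most l. The zero vector (empty superposition,
  coherent rank 0) is included explicitly, since fidelity to it is undefined.\<close>
definition approx_coherent_rank_le :: "state \<Rightarrow> nat \<Rightarrow> bool" where
  "approx_coherent_rank_le \<psi> l \<longleftrightarrow>
     \<psi> = (\<lambda>_. 0) \<or>
     (\<forall>\<delta>>0. \<exists>\<phi>. coherent_rank_le \<phi> l \<and> fidelity \<phi> \<psi> > 1 - \<delta>)"

definition approx_op_coherent_rank_le :: "(state \<Rightarrow> state) \<Rightarrow> nat \<Rightarrow> bool" where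
  "approx_op_coherent_rank_le A l \<longleftrightarrow> (\<forall>\<alpha>. approx_coherent_rank_le (A (coh \<alpha>)) l)"

end

theory Submission
  imports Defs "HOL-Computational_Algebra.Polynomial"
begin


definition lagr :: "nat \<Rightarrow> nat \<Rightarrow> complex poly" where
  "lagr N j = (\<Prod>i\<in>{..N}-{j}. [:- of_nat i / (of_nat j - of_nat i), 1 / (of_nat j - of_nat i):])"

lemma lagr_degree: assumes "j \<le> N" shows "degree (lagr N j) \<le> N"
proof -
  have "degree (lagr N j) \<le> sum (degree \<circ> (\<lambda>i. [:- of_nat i / (of_nat j - of_nat i), 1 / (of_nat j - of_nat (i::nat)):] :: complex poly)) ({..N}-{j})"
    unfolding lagr_def by (rule degree_prod_sum_le) auto
  also have "\<dots> \<le> sum (\<lambda>_. 1) ({..N}-{j})"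
    by (intro sum_mono) auto
  also have "\<dots> \<le> N"
    using assms by (auto simp: card_Diff_singleton)
  finally show ?thesis .
qed

lemma aux_div: "- a / d + b * (1 / d + b * 0) = (b - a) / (d::complex)" by (simp add: diff_divide_distrib)

lemma lagr_eval: assumes "i \<le> N" "j \<le> N"
  shows "poly (lagr N j) (of_nat i) = (if i = j then 1 else 0)"
proof (cases "i = j")
  case True
  have "poly (lagr N j) (of_nat i) = (\<Prod>i'\<in>{..N}-{j}. 1)"
    unfolding lagr_def poly_prod using True
  proof (intro prod.cong refl)
    fix x assume "x \<in> {..N} - {j}"
    then have ne: "of_nat j - of_nat x \<noteq> (0::complex)" by auto
    have "poly [:- of_nat x / (of_nat j - of_nat x), 1 / (of_nat j - of_nat x):] (of_nat i) = (of_nat j - of_nat x) / (of_nat j - (of_nat x::complex))"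
      using True by (simp only: poly_pCons poly_0 True aux_div)
    also have "\<dots> = 1" using ne by (rule divide_self)
    finally show "poly [:- of_nat x / (of_nat j - of_nat x), 1 / (of_nat j - of_nat x):] (of_nat i :: complex) = 1" .
  qed
  then show ?thesis using True by simp
next
  case False
  have "poly (lagr N j) (of_nat i) = (\<Prod>i'\<in>{..N}-{j}. (- of_nat i' / (of_nat j - of_nat i') + of_nat i * (1 / (of_nat j - of_nat i'))))"
    unfolding lagr_def poly_prod by simp
  also have "\<dots> = 0"
    using False assms by (auto intro!: prod_zero bexI[of _ i])
  finally show ?thesis using False by simp
qed

lemma lagrange_exists:
  "\<exists>L :: nat \<Rightarrow> nat \<Rightarrow> complex. \<forall>m\<le>N. \<forall>k\<le>N.
     (\<Sum>j\<le>N. of_nat j ^ m * L j k) = (if m = k then 1 else 0)"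
proof (intro exI allI impI)
  fix m k assume m: "m \<le> N" and k: "k \<le> N"
  have eq: "(\<Sum>j\<le>N. smult (of_nat j ^ m) (lagr N j)) = monom 1 m"
  proof (rule poly_eqI_degree[of "of_nat ` {..N}"])
    fix x assume "x \<in> (of_nat ` {..N} :: complex set)"
    then obtain i where i: "i \<le> N" "x = of_nat i" by auto
    have "poly (\<Sum>j\<le>N. smult (of_nat j ^ m) (lagr N j)) x = (\<Sum>j\<le>N. of_nat j ^ m * (if i = j then 1 else 0))"
      using i by (simp add: poly_sum lagr_eval)
    also have "\<dots> = of_nat i ^ m" using i by (simp add: if_distrib sum.delta cong: if_cong)
    finally show "poly (\<Sum>j\<le>N. smult (of_nat j ^ m) (lagr N j)) x = poly (monom 1 m) x"
      using i by (simp add: poly_monom)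
  next
    have cardA: "card (of_nat ` {..N} :: complex set) = Suc N"
      by (subst card_image) (auto simp: inj_on_def)
    have "degree (\<Sum>j\<le>N. smult (of_nat j ^ m) (lagr N j)) \<le> N"
      by (intro degree_sum_le) (auto intro!: order.trans[OF degree_smult_le] lagr_degree)
    then show "degree (\<Sum>j\<le>N. smult (of_nat j ^ m) (lagr N j)) < card (of_nat ` {..N} :: complex set)"
      using cardA by simp
    show "degree (monom (1::complex) m) < card (of_nat ` {..N} :: complex set)"
      using cardA m by (simp add: degree_monom_eq)
  qed
  have "coeff (\<Sum>j\<le>N. smult (of_nat j ^ m) (lagr N j)) k = coeff (monom 1 m) k"
    by (simp only: eq)
  then show "(\<Sum>j\<le>N. of_nat j ^ m * coeff (lagr N j) k) = (if m = k then 1 else 0)"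
    by (simp add: coeff_sum coeff_monom)
qed


definition Sst :: "(nat \<Rightarrow> complex) \<Rightarrow> state" where
  "Sst p = (\<lambda>n. p n / complex_of_real (sqrt (fact n)))"

definition FF :: "complex \<Rightarrow> nat \<Rightarrow> nat \<Rightarrow> complex" where
  "FF \<alpha> k n = of_nat (n choose k) * fact k * \<alpha> ^ (n - k)"

definition Good :: "complex \<Rightarrow> nat \<Rightarrow> (nat \<Rightarrow> complex) \<Rightarrow> bool" where
  "Good \<alpha> d p \<longleftrightarrow> (\<exists>q. p = (\<lambda>n. \<Sum>k\<le>d. q k * FF \<alpha> k n))"

lemma FF_Suc_right: "FF \<alpha> k (Suc n) = \<alpha> * FF \<alpha> k n + of_nat k * FF \<alpha> (k - 1) n"
proof (cases k)
  case 0 then show ?thesis by (simp add: FF_def)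
next
  case (Suc k')
  have f: "of_nat (Suc k') * (fact k' :: complex) = fact (Suc k')" by simp
  show ?thesis
  proof (cases "k' < n")
    case True
    then have e1: "\<alpha> ^ (n - k') = \<alpha> * \<alpha> ^ (n - Suc k')"
      by (metis Suc_diff_Suc power_Suc)
    show ?thesis using Suc True
      by (simp add: FF_def binomial_Suc_Suc e1 algebra_simps flip: f)
  next
    case False
    then have z: "n choose Suc k' = 0" by simp
    show ?thesis using Suc False
      by (simp add: FF_def binomial_Suc_Suc z algebra_simps flip: f)
  qed
qed

lemma FF_Suc_Suc: "FF \<alpha> (Suc k) (Suc n) = of_nat (Suc n) * FF \<alpha> k n"
proof -
  have "of_nat (Suc n choose Suc k) * (fact (Suc k) :: complex) = of_nat (Suc n) * (of_nat (n choose k) * fact k)"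
    using arg_cong[OF Suc_times_binomial_eq[of n k], of "of_nat :: nat \<Rightarrow> complex"]
    by (simp add: algebra_simps)
  then show ?thesis by (simp add: FF_def algebra_simps)
qed

lemma FF_Suc_0: "FF \<alpha> (Suc k) 0 = 0" by (simp add: FF_def)

lemma Good_FF: assumes "k \<le> d" shows "Good \<alpha> d (FF \<alpha> k)"
  unfolding Good_def
proof (intro exI ext)
  fix n
  have "(\<Sum>i\<le>d. (if i = k then 1 else 0) * FF \<alpha> i n) = (\<Sum>i\<le>d. (if i = k then FF \<alpha> i n else 0))"
    by (intro sum.cong) auto
  also have "\<dots> = FF \<alpha> k n" using assms by (simp add: sum.delta')
  finally show "FF \<alpha> k n = (\<Sum>i\<le>d. (if i = k then 1 else 0) * FF \<alpha> i n)" by simp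
qed

lemma Good_add: assumes "Good \<alpha> d p" "Good \<alpha> d p'" shows "Good \<alpha> d (\<lambda>n. p n + p' n)"
proof -
  obtain q q' where "p = (\<lambda>n. \<Sum>k\<le>d. q k * FF \<alpha> k n)" "p' = (\<lambda>n. \<Sum>k\<le>d. q' k * FF \<alpha> k n)"
    using assms unfolding Good_def by auto
  then show ?thesis unfolding Good_def
    by (intro exI[of _ "\<lambda>k. q k + q' k"]) (simp add: distrib_right sum.distrib)
qed

lemma Good_smult: assumes "Good \<alpha> d p" shows "Good \<alpha> d (\<lambda>n. c * p n)"
proof -
  obtain q where "p = (\<lambda>n. \<Sum>k\<le>d. q k * FF \<alpha> k n)"
    using assms unfolding Good_def by auto
  then show ?thesis unfolding Good_def
    by (intro exI[of _ "\<lambda>k. c * q k"]) (simp add: sum_distrib_left mult.assoc)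
qed

lemma Good_zero: "Good \<alpha> d (\<lambda>n. 0)"
  unfolding Good_def by (auto intro!: exI[of _ "\<lambda>k. 0"])

lemma Good_sum: "finite A \<Longrightarrow> (\<And>i. i \<in> A \<Longrightarrow> Good \<alpha> d (f i)) \<Longrightarrow> Good \<alpha> d (\<lambda>n. \<Sum>i\<in>A. f i n)"
proof (induction A rule: finite_induct)
  case empty then show ?case by (simp add: Good_zero)
next
  case (insert x F)
  then show ?case by (simp add: Good_add)
qed

lemma Good_mono: assumes "Good \<alpha> d p" "d \<le> d'" shows "Good \<alpha> d' p"
proof -
  obtain q where q: "p = (\<lambda>n. \<Sum>k\<le>d. q k * FF \<alpha> k n)" using assms unfolding Good_def by auto
  have "p = (\<lambda>n. \<Sum>k\<le>d. q k * FF \<alpha> k n)" by fact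
  then show ?thesis
    using assms(2) by (auto intro!: Good_sum Good_smult Good_FF)
qed

lemma Good_shift: assumes "Good \<alpha> d p" shows "Good \<alpha> d (\<lambda>n. p (Suc n))"
proof -
  obtain q where q: "p = (\<lambda>n. \<Sum>k\<le>d. q k * FF \<alpha> k n)" using assms unfolding Good_def by auto
  have "(\<lambda>n. p (Suc n)) = (\<lambda>n. \<Sum>k\<le>d. q k * (\<alpha> * FF \<alpha> k n + of_nat k * FF \<alpha> (k - 1) n))"
    by (simp add: q FF_Suc_right)
  moreover have "Good \<alpha> d (\<lambda>n. \<Sum>k\<le>d. q k * (\<alpha> * FF \<alpha> k n + of_nat k * FF \<alpha> (k - 1) n))"
    by (intro Good_sum Good_smult Good_add Good_FF) auto
  ultimately show ?thesis by simp
qed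

lemma Good_raise: assumes "Good \<alpha> d p"
  shows "Good \<alpha> (Suc d) (\<lambda>n. if n = 0 then 0 else of_nat n * p (n - 1))"
proof -
  obtain q where q: "p = (\<lambda>n. \<Sum>k\<le>d. q k * FF \<alpha> k n)" using assms unfolding Good_def by auto
  have "(\<lambda>n. if n = 0 then 0 else of_nat n * p (n - 1)) = (\<lambda>n. \<Sum>k\<le>d. q k * FF \<alpha> (Suc k) n)"
  proof
    fix n show "(if n = 0 then 0 else of_nat n * p (n - 1)) = (\<Sum>k\<le>d. q k * FF \<alpha> (Suc k) n)"
      by (cases n) (simp_all add: q FF_Suc_0 FF_Suc_Suc sum_distrib_left algebra_simps)
  qed
  moreover have "Good \<alpha> (Suc d) (\<lambda>n. \<Sum>k\<le>d. q k * FF \<alpha> (Suc k) n)"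
    by (intro Good_sum Good_smult Good_FF) auto
  ultimately show ?thesis by simp
qed

lemma cancel_aux: "(s::complex) \<noteq> 0 \<Longrightarrow> s * (x / (s * t)) = x / t"
  by (cases "t = 0") (simp_all add: field_simps)

lemma sqrt_fact_Suc: "complex_of_real (sqrt (fact (Suc k))) = complex_of_real (sqrt (real (Suc k))) * complex_of_real (sqrt (fact k))"
proof -
  have "sqrt (fact (Suc k) :: real) = sqrt (real (Suc k)) * sqrt (fact k)"
    by (simp add: real_sqrt_mult del: of_nat_Suc)
  then show ?thesis by (simp only: of_real_mult)
qed

lemma ann_Sst: "ann (Sst p) = Sst (\<lambda>n. p (Suc n))"
proof
  fix k
  have ne: "complex_of_real (sqrt (real (Suc k))) \<noteq> 0" by simp
  show "ann (Sst p) k = Sst (\<lambda>n. p (Suc n)) k"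
    unfolding ann_def Sst_def sqrt_fact_Suc using cancel_aux[OF ne] by simp
qed

lemma cancel_aux2: "(s::complex) \<noteq> 0 \<Longrightarrow> s * s = c \<Longrightarrow> s * (x / t) = c * x / (s * t)"
  by (cases "t = 0") (simp_all add: field_simps)

lemma adag_Sst: "adag (Sst p) = Sst (\<lambda>n. if n = 0 then 0 else of_nat n * p (n - 1))"
proof
  fix k
  show "adag (Sst p) k = Sst (\<lambda>n. if n = 0 then 0 else of_nat n * p (n - 1)) k"
  proof (cases k)
    case 0 then show ?thesis by (simp add: adag_def Sst_def)
  next
    case (Suc k')
    have ne: "complex_of_real (sqrt (real (Suc k'))) \<noteq> 0" by simp
    have sq: "complex_of_real (sqrt (real (Suc k'))) * complex_of_real (sqrt (real (Suc k'))) = of_nat (Suc k')"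
    proof -
      have "sqrt (real (Suc k')) * sqrt (real (Suc k')) = real (Suc k')"
        by (rule real_sqrt_mult_self[THEN trans]) simp
      then have "complex_of_real (sqrt (real (Suc k')) * sqrt (real (Suc k'))) = complex_of_real (real (Suc k'))"
        by (rule arg_cong)
      then show ?thesis by (simp only: of_real_mult of_real_of_nat_eq)
    qed
    have "adag (Sst p) k = complex_of_real (sqrt (real (Suc k'))) * (p k' / complex_of_real (sqrt (fact k')))"
      using Suc by (simp add: adag_def Sst_def del: of_nat_Suc)
    also have "\<dots> = of_nat (Suc k') * p k' / (complex_of_real (sqrt (real (Suc k'))) * complex_of_real (sqrt (fact k')))"
      by (rule cancel_aux2[OF ne sq])
    also have "\<dots> = Sst (\<lambda>n. if n = 0 then 0 else of_nat n * p (n - 1)) k"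
      using Suc by (simp only: Sst_def sqrt_fact_Suc) simp
    finally show ?thesis .
  qed
qed

lemma ann_pow: "Good \<alpha> d p \<Longrightarrow> \<exists>p'. Good \<alpha> d p' \<and> (ann ^^ m) (Sst p) = Sst p'"
proof (induction m)
  case 0 then show ?case by auto
next
  case (Suc m)
  then obtain p' where "Good \<alpha> d p'" "(ann ^^ m) (Sst p) = Sst p'" by auto
  then show ?case by (auto simp: ann_Sst intro!: Good_shift)
qed

lemma adag_pow: "Good \<alpha> d p \<Longrightarrow> \<exists>p'. Good \<alpha> (d + m) p' \<and> (adag ^^ m) (Sst p) = Sst p'"
proof (induction m)
  case 0 then show ?case by (intro exI[of _ p]) simp
next
  case (Suc m)
  then obtain p' where "Good \<alpha> (d + m) p'" "(adag ^^ m) (Sst p) = Sst p'" by auto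
  then show ?case by (auto simp: adag_Sst intro!: Good_raise)
qed

lemma word_op_Good: "Good \<alpha> d p \<Longrightarrow> \<exists>p'. Good \<alpha> (d + sum_list (map fst ws)) p' \<and> word_op ws (Sst p) = Sst p'"
proof (induction ws arbitrary: d p)
  case Nil then show ?case by (intro exI[of _ p]) (simp add: word_op_def)
next
  case (Cons a ws)
  obtain n m where a: "a = (n, m)" by fastforce
  from Cons.IH[OF Cons.prems] obtain p1 where p1: "Good \<alpha> (d + sum_list (map fst ws)) p1" "word_op ws (Sst p) = Sst p1" by auto
  from ann_pow[OF p1(1), of m] obtain p2 where p2: "Good \<alpha> (d + sum_list (map fst ws)) p2" "(ann ^^ m) (Sst p1) = Sst p2" by auto
  from adag_pow[OF p2(1), of n] obtain p3 where p3: "Good \<alpha> (d + sum_list (map fst ws) + n) p3" "(adag ^^ n) (Sst p2) = Sst p3" by auto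
  have "word_op (a # ws) (Sst p) = (adag ^^ n) ((ann ^^ m) (word_op ws (Sst p)))"
    by (simp add: word_op_def a)
  also have "\<dots> = Sst p3" using p1 p2 p3 by simp
  finally show ?case using p3(1) a by (auto simp: add_ac)
qed

lemma coh_Sst: "coh \<alpha> = Sst (\<lambda>n. complex_of_real (exp (- ((cmod \<alpha>) ^ 2) / 2)) * FF \<alpha> 0 n)"
  by (simp add: coh_def Sst_def FF_def fun_eq_iff)

lemma op_Good:
  fixes p N :: nat and b :: "nat \<Rightarrow> complex" and w :: "nat \<Rightarrow> (nat \<times> nat) list"
  assumes "\<forall>i<p. sum_list (map fst (w i)) \<le> N"
  shows "\<exists>P. Good \<alpha> N P \<and> (\<lambda>k. \<Sum>i<p. b i * word_op (w i) (coh \<alpha>) k) = Sst P"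
proof -
  have G0: "Good \<alpha> 0 (\<lambda>n. complex_of_real (exp (- ((cmod \<alpha>) ^ 2) / 2)) * FF \<alpha> 0 n)"
    by (intro Good_smult Good_FF) auto
  have "\<forall>i<p. \<exists>p'. Good \<alpha> N p' \<and> word_op (w i) (coh \<alpha>) = Sst p'"
  proof (intro allI impI)
    fix i assume i: "i < p"
    from word_op_Good[OF G0, of "w i"] obtain p' where
      "Good \<alpha> (sum_list (map fst (w i))) p'" "word_op (w i) (coh \<alpha>) = Sst p'"
      by (auto simp: coh_Sst)
    then show "\<exists>p'. Good \<alpha> N p' \<and> word_op (w i) (coh \<alpha>) = Sst p'"
      using assms i by (auto intro: Good_mono)
  qed
  then obtain f where f: "\<forall>i<p. Good \<alpha> N (f i) \<and> word_op (w i) (coh \<alpha>) = Sst (f i)"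
    by metis
  have "(\<lambda>k. \<Sum>i<p. b i * word_op (w i) (coh \<alpha>) k) = Sst (\<lambda>n. \<Sum>i<p. b i * f i n)"
    using f by (auto simp: Sst_def sum_divide_distrib fun_eq_iff)
  moreover have "Good \<alpha> N (\<lambda>n. \<Sum>i<p. b i * f i n)"
    using f by (intro Good_sum Good_smult) auto
  ultimately show ?thesis by blast
qed



lemma binom_expand:
  fixes \<alpha> h :: complex
  shows "(\<Sum>j\<le>N. c j * (\<alpha> + of_nat j * h) ^ n) =
   (\<Sum>m\<le>n. of_nat (n choose m) * \<alpha> ^ (n - m) * (h ^ m * (\<Sum>j\<le>N. c j * of_nat j ^ m)))"
  (is "?L = ?R")
proof -
  have "?L = (\<Sum>j\<le>N. c j * (\<Sum>m\<le>n. of_nat (n choose m) * (of_nat j * h) ^ m * \<alpha> ^ (n - m)))"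
    by (intro sum.cong refl) (metis (no_types) add.commute binomial_ring)
  also have "\<dots> = (\<Sum>j\<le>N. \<Sum>m\<le>n. c j * (of_nat (n choose m) * (of_nat j * h) ^ m * \<alpha> ^ (n - m)))"
    by (simp add: sum_distrib_left)
  also have "\<dots> = (\<Sum>m\<le>n. \<Sum>j\<le>N. c j * (of_nat (n choose m) * (of_nat j * h) ^ m * \<alpha> ^ (n - m)))"
    by (rule sum.swap)
  also have "\<dots> = ?R"
    by (intro sum.cong refl) (simp add: sum_distrib_left power_mult_distrib algebra_simps)
  finally show ?thesis .
qed

lemma P_expand:
  "(\<Sum>k\<le>N. q k * FF \<alpha> k n) =
   (\<Sum>m\<le>n. of_nat (n choose m) * \<alpha> ^ (n - m) * (if m \<le> N then q m * fact m else 0))"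
proof -
  have "(\<Sum>k\<le>N. q k * FF \<alpha> k n) = (\<Sum>m\<le>N + n. of_nat (n choose m) * \<alpha> ^ (n - m) * (if m \<le> N then q m * fact m else 0))"
    by (rule sum.mono_neutral_cong_left) (auto simp: FF_def)
  also have "\<dots> = (\<Sum>m\<le>n. of_nat (n choose m) * \<alpha> ^ (n - m) * (if m \<le> N then q m * fact m else 0))"
    by (rule sum.mono_neutral_cong_right) auto
  finally show ?thesis .
qed

lemma G_bound:
  fixes h :: complex and q :: "nat \<Rightarrow> complex" and L :: "nat \<Rightarrow> nat \<Rightarrow> complex"
  assumes L: "\<forall>m\<le>N. \<forall>k\<le>N. (\<Sum>j\<le>N. of_nat j ^ m * L j k) = (if m = k then 1 else 0)"
    and h: "h \<noteq> 0" "cmod h \<le> 1"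
  shows "cmod (h ^ m * (\<Sum>j\<le>N. (\<Sum>k\<le>N. q k * fact k * L j k / h ^ k) * of_nat j ^ m)
              - (if m \<le> N then q m * fact m else 0))
         \<le> cmod h * (\<Sum>k\<le>N. cmod (q k) * fact k * (\<Sum>j\<le>N. cmod (L j k))) * real N ^ m"
proof -
  have G: "h ^ m * (\<Sum>j\<le>N. (\<Sum>k\<le>N. q k * fact k * L j k / h ^ k) * of_nat j ^ m)
      = (\<Sum>k\<le>N. q k * fact k * (h ^ m / h ^ k) * (\<Sum>j\<le>N. of_nat j ^ m * L j k))"
  proof -
    have "h ^ m * (\<Sum>j\<le>N. (\<Sum>k\<le>N. q k * fact k * L j k / h ^ k) * of_nat j ^ m)
        = (\<Sum>j\<le>N. \<Sum>k\<le>N. q k * fact k * (h ^ m / h ^ k) * (of_nat j ^ m * L j k))"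
      by (simp add: sum_distrib_left sum_distrib_right algebra_simps)
    also have "\<dots> = (\<Sum>k\<le>N. \<Sum>j\<le>N. q k * fact k * (h ^ m / h ^ k) * (of_nat j ^ m * L j k))"
      by (rule sum.swap)
    also have "\<dots> = (\<Sum>k\<le>N. q k * fact k * (h ^ m / h ^ k) * (\<Sum>j\<le>N. of_nat j ^ m * L j k))"
      by (simp add: sum_distrib_left)
    finally show ?thesis .
  qed
  show ?thesis
  proof (cases "m \<le> N")
    case True
    have "(\<Sum>k\<le>N. q k * fact k * (h ^ m / h ^ k) * (\<Sum>j\<le>N. of_nat j ^ m * L j k))
        = (\<Sum>k\<le>N. if k = m then q k * fact k * (h ^ m / h ^ k) else 0)"
      using L True by (intro sum.cong refl) auto
    also have "\<dots> = q m * fact m" using True h by (simp add: sum.delta')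
    finally show ?thesis using G True by (simp add: mult_nonneg_nonneg sum_nonneg)
  next
    case False
    have "cmod (\<Sum>k\<le>N. q k * fact k * (h ^ m / h ^ k) * (\<Sum>j\<le>N. of_nat j ^ m * L j k))
        \<le> (\<Sum>k\<le>N. cmod (q k * fact k * (h ^ m / h ^ k) * (\<Sum>j\<le>N. of_nat j ^ m * L j k)))"
      by (rule norm_sum)
    also have "\<dots> \<le> (\<Sum>k\<le>N. cmod h * (cmod (q k) * fact k * (\<Sum>j\<le>N. cmod (L j k))) * real N ^ m)"
    proof (intro sum_mono)
      fix k assume k: "k \<in> {..N}"
      then have km: "k < m" using False by auto
      have hp: "cmod (h ^ m / h ^ k) \<le> cmod h"
      proof -
        have "h ^ m / h ^ k = h ^ (m - k)" using h km by (simp add: power_diff)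
        moreover have "cmod h ^ (m - k) \<le> cmod h ^ 1"
          using h km by (intro power_decreasing) auto
        ultimately show ?thesis by (simp add: norm_power)
      qed
      have sj: "cmod (\<Sum>j\<le>N. of_nat j ^ m * L j k) \<le> (\<Sum>j\<le>N. cmod (L j k)) * real N ^ m"
      proof -
        have "cmod (\<Sum>j\<le>N. of_nat j ^ m * L j k) \<le> (\<Sum>j\<le>N. cmod (of_nat j ^ m * L j k))"
          by (rule norm_sum)
        also have "\<dots> \<le> (\<Sum>j\<le>N. cmod (L j k) * real N ^ m)"
        proof (intro sum_mono)
          fix j assume "j \<in> {..N}"
          then have "real j ^ m \<le> real N ^ m" by (intro power_mono) auto
          then show "cmod (of_nat j ^ m * L j k) \<le> cmod (L j k) * real N ^ m"
            by (simp add: norm_mult norm_power mult_left_mono mult.commute[of "real j ^ m"])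
        qed
        also have "\<dots> = (\<Sum>j\<le>N. cmod (L j k)) * real N ^ m" by (simp add: sum_distrib_right)
        finally show ?thesis .
      qed
      have "cmod (q k * fact k * (h ^ m / h ^ k) * (\<Sum>j\<le>N. of_nat j ^ m * L j k))
          = (cmod (q k) * fact k) * cmod (h ^ m / h ^ k) * cmod (\<Sum>j\<le>N. of_nat j ^ m * L j k)"
        by (simp only: norm_mult norm_fact)
      also have "\<dots> \<le> (cmod (q k) * fact k) * cmod h * ((\<Sum>j\<le>N. cmod (L j k)) * real N ^ m)"
        by (intro mult_mono hp sj mult_nonneg_nonneg) auto
      finally show "cmod (q k * fact k * (h ^ m / h ^ k) * (\<Sum>j\<le>N. of_nat j ^ m * L j k))
          \<le> cmod h * (cmod (q k) * fact k * (\<Sum>j\<le>N. cmod (L j k))) * real N ^ m"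
        by (simp add: algebra_simps)
    qed
    also have "\<dots> = cmod h * (\<Sum>k\<le>N. cmod (q k) * fact k * (\<Sum>j\<le>N. cmod (L j k))) * real N ^ m"
      by (simp add: sum_distrib_left sum_distrib_right)
    finally show ?thesis using G False by simp
  qed
qed

lemma err_bound:
  fixes h :: complex and q :: "nat \<Rightarrow> complex" and L :: "nat \<Rightarrow> nat \<Rightarrow> complex"
  assumes L: "\<forall>m\<le>N. \<forall>k\<le>N. (\<Sum>j\<le>N. of_nat j ^ m * L j k) = (if m = k then 1 else 0)"
    and h: "h \<noteq> 0" "cmod h \<le> 1"
  shows "cmod ((\<Sum>j\<le>N. (\<Sum>k\<le>N. q k * fact k * L j k / h ^ k) * (\<alpha> + of_nat j * h) ^ n)
              - (\<Sum>k\<le>N. q k * FF \<alpha> k n))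
         \<le> cmod h * (\<Sum>k\<le>N. cmod (q k) * fact k * (\<Sum>j\<le>N. cmod (L j k))) * (cmod \<alpha> + real N) ^ n"
proof -
  define K where "K = (\<Sum>k\<le>N. cmod (q k) * fact k * (\<Sum>j\<le>N. cmod (L j k)))"
  define G where "G m = h ^ m * (\<Sum>j\<le>N. (\<Sum>k\<le>N. q k * fact k * L j k / h ^ k) * of_nat j ^ m)" for m
  define T where "T m = (if m \<le> N then q m * fact m else 0)" for m
  have "(\<Sum>j\<le>N. (\<Sum>k\<le>N. q k * fact k * L j k / h ^ k) * (\<alpha> + of_nat j * h) ^ n)
              - (\<Sum>k\<le>N. q k * FF \<alpha> k n)
      = (\<Sum>m\<le>n. of_nat (n choose m) * \<alpha> ^ (n - m) * (G m - T m))"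
    unfolding binom_expand P_expand G_def T_def by (simp add: sum_subtractf algebra_simps)
  also have "cmod \<dots> \<le> (\<Sum>m\<le>n. cmod (of_nat (n choose m) * \<alpha> ^ (n - m) * (G m - T m)))"
    by (rule norm_sum)
  also have "\<dots> \<le> (\<Sum>m\<le>n. real (n choose m) * cmod \<alpha> ^ (n - m) * (cmod h * K * real N ^ m))"
  proof (intro sum_mono)
    fix m
    have "cmod (G m - T m) \<le> cmod h * K * real N ^ m"
      unfolding G_def T_def K_def by (rule G_bound[OF L h])
    then show "cmod (of_nat (n choose m) * \<alpha> ^ (n - m) * (G m - T m)) \<le> real (n choose m) * cmod \<alpha> ^ (n - m) * (cmod h * K * real N ^ m)"
      by (simp add: norm_mult norm_power mult_left_mono)
  qed
  also have "\<dots> = cmod h * K * (\<Sum>m\<le>n. real (n choose m) * real N ^ m * cmod \<alpha> ^ (n - m))"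
    by (simp add: sum_distrib_left algebra_simps)
  also have "\<dots> = cmod h * K * (cmod \<alpha> + real N) ^ n"
    by (simp add: binomial_ring[of "real N" "cmod \<alpha>"] add.commute)
  finally show ?thesis unfolding K_def .
qed



lemma infsum_suminf_norm:
  fixes f :: "nat \<Rightarrow> complex"
  assumes "summable (\<lambda>n. norm (f n))"
  shows "infsum f UNIV = suminf f"
  by (intro infsumI norm_summable_imp_has_sum assms summable_sums summable_norm_cancel)

lemma inner_self_st:
  assumes "summable (\<lambda>n. cmod (f n) ^ 2)"
  shows "inner_st f f = complex_of_real (\<Sum>n. cmod (f n) ^ 2)"
proof -
  have e: "(\<lambda>k. cnj (f k) * f k) = (\<lambda>k. complex_of_real (cmod (f k) ^ 2))"
    by (rule ext) (metis complex_norm_square mult.commute)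
  have "inner_st f f = (\<Sum>k. complex_of_real (cmod (f k) ^ 2))"
    unfolding inner_st_def e using assms by (intro infsum_suminf_norm) (simp add: norm_power)
  also have "\<dots> = complex_of_real (\<Sum>n. cmod (f n) ^ 2)"
    by (rule suminf_of_real[OF assms, symmetric])
  finally show ?thesis .
qed

lemma fid_bound:
  fixes \<psi> \<phi> :: "nat \<Rightarrow> complex" and r :: "nat \<Rightarrow> real"
  assumes sr: "summable (\<lambda>n. r n ^ 2)" and r0: "\<And>n. r n \<ge> 0"
    and bpsi: "\<And>n. cmod (\<psi> n) \<le> a * r n"
    and be: "\<And>n. cmod (\<phi> n - \<psi> n) \<le> u * b * r n"
    and a0: "a \<ge> 0" and b0: "b \<ge> 0" and u0: "u \<ge> 0"
    and Ypos: "(\<Sum>n. cmod (\<psi> n) ^ 2) > 0"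
    and small: "2 * (u * a * b * (\<Sum>n. r n ^ 2)) < (\<Sum>n. cmod (\<psi> n) ^ 2)"
  shows "fidelity \<phi> \<psi> \<ge> ((\<Sum>n. cmod (\<psi> n) ^ 2) - u * a * b * (\<Sum>n. r n ^ 2)) ^ 2 /
      (((\<Sum>n. cmod (\<psi> n) ^ 2) + 2 * (u * a * b * (\<Sum>n. r n ^ 2)) + u ^ 2 * b ^ 2 * (\<Sum>n. r n ^ 2)) * (\<Sum>n. cmod (\<psi> n) ^ 2))"
proof -
  define e where "e n = \<phi> n - \<psi> n" for n
  define Y where "Y = (\<Sum>n. cmod (\<psi> n) ^ 2)"
  define S where "S = (\<Sum>n. r n ^ 2)"
  define X where "X = (\<Sum>n. cmod (\<phi> n) ^ 2)"
  define M where "M = u * a * b * S"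
  define E where "E = u ^ 2 * b ^ 2 * S"
  have phi: "\<phi> n = \<psi> n + e n" for n by (simp add: e_def)
  have be': "cmod (e n) \<le> u * b * r n" for n using be by (simp add: e_def)
  have S0: "S \<ge> 0" unfolding S_def by (intro suminf_nonneg sr) auto
  have p1: "cmod (\<psi> n) ^ 2 \<le> a ^ 2 * r n ^ 2" for n
    using bpsi[of n] by (metis norm_ge_zero power_mono power_mult_distrib)
  have p2: "cmod (e n) * cmod (\<psi> n) \<le> u * a * b * r n ^ 2" for n
  proof -
    have "cmod (e n) * cmod (\<psi> n) \<le> (u * b * r n) * (a * r n)"
      by (intro mult_mono be' bpsi) (use u0 b0 r0 in auto)
    then show ?thesis by (simp add: power2_eq_square algebra_simps)
  qed
  have p3: "cmod (e n) ^ 2 \<le> u ^ 2 * b ^ 2 * r n ^ 2" for n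
    using be'[of n] by (metis norm_ge_zero power_mono power_mult_distrib)
  have p4: "cmod (\<phi> n) ^ 2 \<le> cmod (\<psi> n) ^ 2 + (2 * (u * a * b) + u ^ 2 * b ^ 2) * r n ^ 2" for n
  proof -
    have "cmod (\<phi> n) \<le> cmod (\<psi> n) + cmod (e n)" unfolding phi by (rule norm_triangle_ineq)
    then have "cmod (\<phi> n) ^ 2 \<le> (cmod (\<psi> n) + cmod (e n)) ^ 2" by (intro power_mono) auto
    also have "\<dots> = cmod (\<psi> n) ^ 2 + 2 * (cmod (e n) * cmod (\<psi> n)) + cmod (e n) ^ 2"
      by (simp add: power2_eq_square algebra_simps)
    finally show ?thesis using p2[of n] p3[of n] by (simp add: algebra_simps)
  qed
  have p5: "cmod (\<phi> n) ^ 2 \<ge> cmod (\<psi> n) ^ 2 - 2 * (u * a * b) * r n ^ 2" for n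
  proof -
    have "cmod (\<phi> n - e n) \<le> cmod (\<phi> n) + cmod (e n)" by (rule norm_triangle_ineq4)
    then have t: "cmod (\<phi> n) \<ge> cmod (\<psi> n) - cmod (e n)" by (simp add: e_def)
    have "cmod (\<psi> n) ^ 2 - 2 * (cmod (e n) * cmod (\<psi> n)) \<le> cmod (\<phi> n) ^ 2"
    proof (cases "cmod (\<psi> n) \<ge> cmod (e n)")
      case True
      then have "(cmod (\<psi> n) - cmod (e n)) ^ 2 \<le> cmod (\<phi> n) ^ 2"
        using t by (intro power_mono) auto
      moreover have "cmod (\<psi> n) ^ 2 - 2 * (cmod (e n) * cmod (\<psi> n)) \<le> (cmod (\<psi> n) - cmod (e n)) ^ 2"
        by (simp add: power2_eq_square algebra_simps)
      ultimately show ?thesis by linarith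
    next
      case False
      then have "cmod (\<psi> n) * cmod (\<psi> n) \<le> cmod (e n) * cmod (\<psi> n)"
        by (intro mult_right_mono) auto
      then have "cmod (\<psi> n) ^ 2 - 2 * (cmod (e n) * cmod (\<psi> n)) \<le> 0"
        by (simp add: power2_eq_square) (smt (verit) mult_nonneg_nonneg norm_ge_zero)
      then show ?thesis by (smt (verit) zero_le_power2)
    qed
    then show ?thesis using p2[of n] by linarith
  qed
  have s1: "summable (\<lambda>n. cmod (\<psi> n) ^ 2)"
    by (rule summable_comparison_test'[where g="\<lambda>n. a ^ 2 * r n ^ 2" and N=0])
       (use sr p1 in \<open>auto intro: summable_mult\<close>)
  have s2: "summable (\<lambda>n. cmod (e n) * cmod (\<psi> n))"
    by (rule summable_comparison_test'[where g="\<lambda>n. u * a * b * r n ^ 2" and N=0])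
       (use sr p2 in \<open>auto intro: summable_mult\<close>)
  have s3: "summable (\<lambda>n. cmod (\<phi> n) ^ 2)"
    by (rule summable_comparison_test'[where g="\<lambda>n. cmod (\<psi> n) ^ 2 + (2 * (u * a * b) + u ^ 2 * b ^ 2) * r n ^ 2" and N=0])
       (use sr p4 s1 in \<open>auto intro: summable_mult summable_add\<close>)
  have s4: "summable (\<lambda>n. cmod (cnj (\<phi> n) * \<psi> n))"
  proof -
    have bd: "cmod (cnj (\<phi> n) * \<psi> n) \<le> cmod (\<phi> n) ^ 2 + cmod (\<psi> n) ^ 2" for n
    proof -
      have "cmod (cnj (\<phi> n) * \<psi> n) = cmod (\<phi> n) * cmod (\<psi> n)" by (simp add: norm_mult)
      also have "\<dots> \<le> cmod (\<phi> n) ^ 2 + cmod (\<psi> n) ^ 2"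
      proof -
        have "0 \<le> (cmod (\<phi> n) - cmod (\<psi> n)) ^ 2" by simp
        then have h1: "2 * cmod (\<phi> n) * cmod (\<psi> n) \<le> cmod (\<phi> n) ^ 2 + cmod (\<psi> n) ^ 2"
          by (simp add: power2_diff)
        have "0 \<le> cmod (\<phi> n) * cmod (\<psi> n)" by simp
        with h1 show ?thesis by linarith
      qed
      finally show ?thesis .
    qed
    show ?thesis
      by (rule summable_comparison_test'[where g="\<lambda>n. cmod (\<phi> n) ^ 2 + cmod (\<psi> n) ^ 2" and N=0])
         (use bd summable_add[OF s3 s1] in auto)
  qed
  have s5: "summable (\<lambda>n. cmod (cnj (e n) * \<psi> n))"
    using s2 by (simp add: norm_mult)
  have s6: "summable (\<lambda>n. complex_of_real (cmod (\<psi> n) ^ 2))"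
    unfolding summable_of_real_iff by (rule s1)
  have ip: "inner_st \<phi> \<psi> = complex_of_real Y + (\<Sum>n. cnj (e n) * \<psi> n)"
  proof -
    have "inner_st \<phi> \<psi> = (\<Sum>n. cnj (\<phi> n) * \<psi> n)"
      unfolding inner_st_def by (rule infsum_suminf_norm[OF s4])
    also have "\<dots> = (\<Sum>n. complex_of_real (cmod (\<psi> n) ^ 2) + cnj (e n) * \<psi> n)"
    proof -
      have pt: "cnj (\<phi> n) * \<psi> n = complex_of_real (cmod (\<psi> n) ^ 2) + cnj (e n) * \<psi> n" for n
        unfolding phi complex_norm_square by (simp add: algebra_simps)
      show ?thesis by (simp only: pt)
    qed
    also have "\<dots> = (\<Sum>n. complex_of_real (cmod (\<psi> n) ^ 2)) + (\<Sum>n. cnj (e n) * \<psi> n)"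
      by (rule suminf_add[symmetric]) (use s6 s5 summable_norm_cancel in auto)
    also have "(\<Sum>n. complex_of_real (cmod (\<psi> n) ^ 2)) = complex_of_real Y"
      unfolding Y_def by (rule suminf_of_real[OF s1, symmetric])
    finally show ?thesis .
  qed
  have Zb: "cmod (\<Sum>n. cnj (e n) * \<psi> n) \<le> M"
  proof -
    have "cmod (\<Sum>n. cnj (e n) * \<psi> n) \<le> (\<Sum>n. cmod (cnj (e n) * \<psi> n))"
      by (rule summable_norm[OF s5])
    also have "\<dots> \<le> (\<Sum>n. u * a * b * r n ^ 2)"
      by (intro suminf_le s5 summable_mult sr) (use p2 in \<open>simp add: norm_mult\<close>)
    also have "\<dots> = M" unfolding M_def S_def by (rule suminf_mult[OF sr])
    finally show ?thesis .
  qed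
  have Xup: "X \<le> Y + 2 * M + E"
  proof -
    have "X \<le> (\<Sum>n. cmod (\<psi> n) ^ 2 + (2 * (u * a * b) + u ^ 2 * b ^ 2) * r n ^ 2)"
      unfolding X_def by (intro suminf_le s3 summable_add s1 summable_mult sr p4)
    also have "\<dots> = Y + (2 * (u * a * b) + u ^ 2 * b ^ 2) * S"
      unfolding Y_def S_def by (subst suminf_add[symmetric]) (auto intro: s1 summable_mult sr simp: suminf_mult[OF sr])
    finally show ?thesis by (simp add: M_def E_def algebra_simps)
  qed
  have Xlo: "X \<ge> Y - 2 * M"
  proof -
    have "(\<Sum>n. cmod (\<psi> n) ^ 2 - 2 * (u * a * b) * r n ^ 2) \<le> X"
      unfolding X_def by (intro suminf_le s3 summable_diff s1 summable_mult sr p5)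
    moreover have "(\<Sum>n. cmod (\<psi> n) ^ 2 - 2 * (u * a * b) * r n ^ 2) = Y - 2 * (u * a * b) * S"
      unfolding Y_def S_def by (subst suminf_diff[symmetric]) (auto intro: s1 summable_mult sr simp: suminf_mult[OF sr])
    ultimately show ?thesis by (simp add: M_def algebra_simps)
  qed
  have Y0: "Y > 0" using Ypos by (simp add: Y_def)
  have M0: "M \<ge> 0" unfolding M_def using u0 a0 b0 S0 by simp
  have E0: "E \<ge> 0" unfolding E_def using S0 by simp
  have MY: "2 * M < Y" using small by (simp add: M_def S_def Y_def)
  have Xpos: "X > 0" using Xlo MY by linarith
  have absip: "cmod (inner_st \<phi> \<psi>) \<ge> Y - M"
  proof -
    have "cmod (complex_of_real Y) - cmod (\<Sum>n. cnj (e n) * \<psi> n) \<le> cmod (inner_st \<phi> \<psi>)"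
      unfolding ip by (rule norm_diff_ineq)
    then show ?thesis using Zb Y0 by simp
  qed
  have fid: "fidelity \<phi> \<psi> = cmod (inner_st \<phi> \<psi>) ^ 2 / (X * Y)"
    unfolding fidelity_def X_def Y_def using inner_self_st[OF s1] inner_self_st[OF s3] by simp
  have "(Y - M) ^ 2 / ((Y + 2 * M + E) * Y) \<le> (Y - M) ^ 2 / (X * Y)"
    by (intro divide_left_mono mult_right_mono Xup mult_pos_pos Xpos Y0) (use Y0 M0 E0 in auto)
  also have "\<dots> \<le> cmod (inner_st \<phi> \<psi>) ^ 2 / (X * Y)"
    by (intro divide_right_mono power_mono absip) (use MY M0 Xpos Y0 in auto)
  finally show ?thesis unfolding fid by (simp add: M_def E_def Y_def S_def)
qed



lemma FF_bound: "cmod (FF \<alpha> k n) \<le> fact k * (cmod \<alpha> + 1) ^ n"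
proof -
  have "real (n choose k) * cmod \<alpha> ^ (n - k) \<le> (cmod \<alpha> + 1) ^ n"
  proof (cases "k \<le> n")
    case True
    have "(cmod \<alpha> + 1) ^ n = (\<Sum>m\<le>n. real (n choose m) * 1 ^ m * cmod \<alpha> ^ (n - m))"
      using binomial_ring[of 1 "cmod \<alpha>" n] by (simp add: add.commute)
    also have "\<dots> \<ge> real (n choose k) * 1 ^ k * cmod \<alpha> ^ (n - k)"
      by (rule member_le_sum) (use True in auto)
    finally show ?thesis by simp
  next
    case False then show ?thesis by (simp add: binomial_eq_0)
  qed
  then have "fact k * (real (n choose k) * cmod \<alpha> ^ (n - k)) \<le> fact k * (cmod \<alpha> + 1) ^ n"
    by (intro mult_left_mono) auto
  then show ?thesis by (simp add: FF_def norm_mult norm_power algebra_simps)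
qed

lemma main_approx:
  fixes \<alpha> :: complex and N :: nat
  assumes G: "Good \<alpha> N P"
  shows "approx_coherent_rank_le (Sst P) (N + 1)"
proof -
  obtain q where q: "P = (\<lambda>n. \<Sum>k\<le>N. q k * FF \<alpha> k n)" using G unfolding Good_def by auto
  obtain L :: "nat \<Rightarrow> nat \<Rightarrow> complex" where
    L: "\<forall>m\<le>N. \<forall>k\<le>N. (\<Sum>j\<le>N. of_nat j ^ m * L j k) = (if m = k then 1 else 0)"
    using lagrange_exists by blast
  define R where "R = cmod \<alpha> + real N + 1"
  define r where "r n = R ^ n / sqrt (fact n)" for n
  define K1 where "K1 = (\<Sum>k\<le>N. cmod (q k) * fact k)"
  define K where "K = (\<Sum>k\<le>N. cmod (q k) * fact k * (\<Sum>j\<le>N. cmod (L j k)))"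
  have R1: "R \<ge> 1" unfolding R_def by simp
  have r0: "r n \<ge> 0" for n unfolding r_def using R1 by simp
  have K10: "K1 \<ge> 0" unfolding K1_def by (intro sum_nonneg) auto
  have K0: "K \<ge> 0" unfolding K_def by (intro sum_nonneg mult_nonneg_nonneg) (auto intro: sum_nonneg)
  have sr: "summable (\<lambda>n. r n ^ 2)"
  proof -
    have "r n ^ 2 = inverse (fact n) * (R ^ 2) ^ n" for n
      unfolding r_def by (simp add: power_divide power_mult_distrib field_simps flip: power_mult)
    then show ?thesis using summable_exp[of "R ^ 2"] by simp
  qed
  have sqf: "sqrt (fact n :: real) > 0" for n by simp
  have bpsi: "cmod (Sst P n) \<le> K1 * r n" for n
  proof -
    have "cmod (P n) \<le> (\<Sum>k\<le>N. cmod (q k * FF \<alpha> k n))" unfolding q by (rule norm_sum)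
    also have "\<dots> \<le> (\<Sum>k\<le>N. cmod (q k) * fact k * R ^ n)"
    proof (intro sum_mono)
      fix k
      have "(cmod \<alpha> + 1) ^ n \<le> R ^ n" unfolding R_def by (intro power_mono) auto
      then have "cmod (FF \<alpha> k n) \<le> fact k * R ^ n"
        using FF_bound[of \<alpha> k n] by (meson fact_ge_zero mult_left_mono order_trans)
      then show "cmod (q k * FF \<alpha> k n) \<le> cmod (q k) * fact k * R ^ n"
        by (simp add: norm_mult mult_left_mono mult.assoc)
    qed
    also have "\<dots> = K1 * R ^ n" unfolding K1_def by (simp add: sum_distrib_right)
    finally have "cmod (P n) \<le> K1 * R ^ n" .
    then show ?thesis unfolding Sst_def r_def using sqf[of n]
      by (simp add: norm_divide divide_right_mono)
  qed
  show ?thesis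
  proof (cases "Sst P = (\<lambda>_. 0)")
    case True then show ?thesis unfolding approx_coherent_rank_le_def by simp
  next
    case False
    then obtain n0 where n0: "Sst P n0 \<noteq> 0" by auto
    define Y where "Y = (\<Sum>n. cmod (Sst P n) ^ 2)"
    define S where "S = (\<Sum>n. r n ^ 2)"
    have sY: "summable (\<lambda>n. cmod (Sst P n) ^ 2)"
    proof (rule summable_comparison_test'[where g="\<lambda>n. K1 ^ 2 * r n ^ 2" and N=0])
      show "summable (\<lambda>n. K1 ^ 2 * r n ^ 2)" using sr by (rule summable_mult)
      fix n show "norm (cmod (Sst P n) ^ 2) \<le> K1 ^ 2 * r n ^ 2"
        using bpsi[of n] by (simp add: power_mono flip: power_mult_distrib)
    qed
    have Y0: "Y > 0" unfolding Y_def using n0 by (intro suminf_pos2[OF sY]) auto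
    have S0: "S \<ge> 0" unfolding S_def by (intro suminf_nonneg sr) auto
    have "\<forall>\<delta>>0. \<exists>\<phi>. coherent_rank_le \<phi> (N + 1) \<and> fidelity \<phi> (Sst P) > 1 - \<delta>"
    proof (intro allI impI)
      fix \<delta> :: real assume d: "\<delta> > 0"
      define g where "g u = (Y - u * K1 * K * S) ^ 2 / ((Y + 2 * (u * K1 * K * S) + u ^ 2 * K ^ 2 * S) * Y)" for u :: real
      have "(g \<longlongrightarrow> (Y - 0 * K1 * K * S) ^ 2 / ((Y + 2 * (0 * K1 * K * S) + 0 ^ 2 * K ^ 2 * S) * Y)) (at_right 0)"
        unfolding g_def by (intro tendsto_intros) (use Y0 in auto)
      then have gl: "(g \<longlongrightarrow> 1) (at_right 0)" using Y0 by (simp add: power2_eq_square)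
      have ev1: "eventually (\<lambda>u. g u > 1 - \<delta>) (at_right 0)"
        using order_tendstoD(1)[OF gl, of "1 - \<delta>"] d by simp
      have "((\<lambda>u::real. 2 * (u * K1 * K * S)) \<longlongrightarrow> 2 * (0 * K1 * K * S)) (at_right 0)"
        by (intro tendsto_intros)
      then have ev2: "eventually (\<lambda>u. 2 * (u * K1 * K * S) < Y) (at_right 0)"
        using order_tendstoD(2)[of _ 0 _ Y] Y0 by simp
      obtain b where b: "b > 0" "\<forall>y>0. y < b \<longrightarrow> g y > 1 - \<delta> \<and> 2 * (y * K1 * K * S) < Y"
        using eventually_conj[OF ev1 ev2] unfolding eventually_at_right_field by auto
      define u where "u = min (b / 2) 1"
      have u: "u > 0" "u < b" "u \<le> 1" unfolding u_def using b by auto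
      have gu: "g u > 1 - \<delta>" and smallu: "2 * (u * K1 * K * S) < Y" using b u by auto
      define h where "h = complex_of_real u"
      have h: "h \<noteq> 0" "cmod h \<le> 1" "cmod h = u" unfolding h_def using u by auto
      define c where "c j = (\<Sum>k\<le>N. q k * fact k * L j k / h ^ k)" for j
      define Phi where "Phi n = (\<Sum>j\<le>N. c j * (\<alpha> + of_nat j * h) ^ n)" for n
      have be: "cmod (Sst Phi n - Sst P n) \<le> u * K * r n" for n
      proof -
        have "cmod (Phi n - P n) \<le> cmod h * K * (cmod \<alpha> + real N) ^ n"
          unfolding Phi_def c_def K_def q by (rule err_bound[OF L h(1,2)])
        also have "\<dots> \<le> u * K * R ^ n"
          unfolding h(3) R_def using u K0 by (intro mult_left_mono power_mono) auto
        finally have "cmod (Phi n - P n) \<le> u * K * R ^ n" .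
        moreover have "Sst Phi n - Sst P n = (Phi n - P n) / complex_of_real (sqrt (fact n))"
          unfolding Sst_def by (simp add: diff_divide_distrib)
        ultimately show ?thesis unfolding r_def using sqf[of n]
          by (simp add: norm_divide divide_right_mono)
      qed
      have fb: "fidelity (Sst Phi) (Sst P) \<ge> g u"
        unfolding g_def Y_def S_def
        using fid_bound[OF sr r0 bpsi be K10 K0 _ _ ] u Y0 smallu
        by (simp add: Y_def S_def mult.assoc mult.left_commute)
      have cr: "coherent_rank_le (Sst Phi) (N + 1)"
        unfolding coherent_rank_le_def
      proof (intro exI ext)
        fix n
        define E where "E j = complex_of_real (exp (- ((cmod (\<alpha> + of_nat j * h)) ^ 2) / 2))" for j
        have E0: "E j \<noteq> 0" for j unfolding E_def by simp
        show "Sst Phi n = (\<Sum>i<N + 1. c i / E i * coh (\<alpha> + of_nat i * h) n)"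
          unfolding Sst_def Phi_def coh_def E_def[symmetric]
          using E0 by (simp add: sum_divide_distrib lessThan_Suc_atMost)
      qed
      show "\<exists>\<phi>. coherent_rank_le \<phi> (N + 1) \<and> fidelity \<phi> (Sst P) > 1 - \<delta>"
        using cr fb gu by (intro exI[of _ "Sst Phi"]) auto
    qed
    then show ?thesis unfolding approx_coherent_rank_le_def by blast
  qed
qed


theorem theorem3:
  fixes p N :: nat and b :: "nat \<Rightarrow> complex" and w :: "nat \<Rightarrow> (nat \<times> nat) list"
  assumes "\<forall>i<p. sum_list (map fst (w i)) \<le> N"
  shows "approx_op_coherent_rank_le
           (\<lambda>\<psi> k. \<Sum>i<p. b i * word_op (w i) \<psi> k) (N + 1)"
  unfolding approx_op_coherent_rank_le_def
proof
  fix \<alpha>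
  obtain P where P: "Good \<alpha> N P" "(\<lambda>k. \<Sum>i<p. b i * word_op (w i) (coh \<alpha>) k) = Sst P"
    using op_Good[OF assms] by blast
  show "approx_coherent_rank_le ((\<lambda>\<psi> k. \<Sum>i<p. b i * word_op (w i) \<psi> k) (coh \<alpha>)) (N + 1)"
    using main_approx[OF P(1)] P(2) by simp
qed

end
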